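(* Let $p$ be a prime, $k, r \geq 1$, $G_1, \dots, G_k$ finite-dimensional vector spaces over $\mathbb{F}_p$, $G^{\oplus} = G_1 \oplus \cdots \oplus G_k$ with each $G_i$ regarded as a subspace of $G^{\oplus}$, and $f \colon G^{\oplus} \to \mathbb{D}$. Let $\xi > 0$ and let $\psi \colon (G^{\oplus})^{r-1} \times G_1 \times \cdots \times G_k \to \mathbb{F}_p$ be a multilinear form such that \[\mathbb{E}_{a^{(1)}, \dots, a^{(r-1)} \in G^{\oplus},\ d_1 \in G_1, \dots, d_k \in G_k,\ x \in G^{\oplus}}\ \partial_{a^{(1)}} \cdots \partial_{a^{(r-1)}} \partial_{d_1} \cdots \partial_{d_k} f(x)\, \omega^{\psi(a^{(1)}, \dots, a^{(r-1)}, d_1, \dots, d_k)} \geq \xi,\] where $d_i \in G_i$ is viewed in $G^{\oplus}$. Let $i < j$ be elements of $[r-1]$ and define the multilinear form $\psi_{ij} \colon (G^{\oplus})^{r-1} \times G_1 \times \cdots \times G_k \to \mathbb{F}_p$ by $\psi_{ij}(a^{(1)}, \dots, a^{(r-1)}, d_1, \dots, d_k) = \psi(a^{(1)}, \dots, a^{(r-1)}, d_1, \dots, d_k) - \psi(\tilde a^{(1)}, \dots, \tilde a^{(r-1)}, d_1, \dots, d_k)$, where $(\tilde a^{(1)}, \dots, \tilde a^{(r-1)})$ is obtained from $(a^{(1)}, \dots, a^{(r-1)})$ by swapping $a^{(i)}$ and $a^{(j)}$. Then $\operatorname{bias} \psi_{ij} \geq \xi^8$.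
   Context: $\mathbb{D} = \{z \in \mathbb{C} : |z| \leq 1\}$, $\omega = e^{2\pi i/p}$, $\mathbb{E}$ is the uniform average, $\partial_u f(x) = f(x+u)\overline{f(x)}$. For a multilinear form $\alpha$ on a product $V_1 \times \cdots \times V_s$ of $\mathbb{F}_p$-vector spaces, $\operatorname{bias}\alpha = \mathbb{E}_{v_1 \in V_1, \dots, v_s \in V_s} \omega^{\alpha(v_1, \dots, v_s)}$. *)

theory Defs
  imports "HOL-Analysis.Analysis" "HOL-Combinatorics.Transposition"
          "Berlekamp_Zassenhaus.Finite_Field"
begin

text \<open>The prime field F_p is the type 'p mod_ring with 'p of class prime_card,
  so p = CARD('p).  The space G_1 + ... + G_k is modelled in coordinates:
  a vector is a function from coordinate indices (i, c) to F_p; block i (i < k)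
  has dims i coordinates, and vectors vanish outside the coordinate set.\<close>

type_synonym 'p vec = "nat \<times> nat \<Rightarrow> 'p mod_ring"

definition coords :: "nat \<Rightarrow> (nat \<Rightarrow> nat) \<Rightarrow> (nat \<times> nat) set" where
  "coords k dims = {(i, c). i < k \<and> c < dims i}"

definition supp_space :: "(nat \<times> nat) set \<Rightarrow> 'p::prime_card vec set" where
  "supp_space S = {x. \<forall>j. j \<notin> S \<longrightarrow> x j = 0}"

definition Gsum :: "nat \<Rightarrow> (nat \<Rightarrow> nat) \<Rightarrow> 'p::prime_card vec set" where
  "Gsum k dims = supp_space (coords k dims)"

definition Gblock :: "(nat \<Rightarrow> nat) \<Rightarrow> nat \<Rightarrow> 'p::prime_card vec set" where
  "Gblock dims i = supp_space {(i, c) | c. c < dims i}"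

definition vadd :: "'p::prime_card vec \<Rightarrow> 'p vec \<Rightarrow> 'p vec" where
  "vadd x y = (\<lambda>j. x j + y j)"

definition vscale :: "'p::prime_card mod_ring \<Rightarrow> 'p vec \<Rightarrow> 'p vec" where
  "vscale c x = (\<lambda>j. c * x j)"

definition avg :: "'a set \<Rightarrow> ('a \<Rightarrow> complex) \<Rightarrow> complex" where
  "avg S g = (\<Sum>x\<in>S. g x) / of_nat (card S)"

definition omega_pow :: "'p::prime_card mod_ring \<Rightarrow> complex" where
  "omega_pow t = exp (2 * pi * \<i> / of_nat CARD('p)) ^ nat (to_int_mod_ring t)"

definition mderiv :: "'p::prime_card vec \<Rightarrow> ('p vec \<Rightarrow> complex) \<Rightarrow> 'p vec \<Rightarrow> complex" where
  "mderiv u f = (\<lambda>x. f (vadd x u) * cnj (f x))"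

fun mderivs :: "'p::prime_card vec list \<Rightarrow> ('p vec \<Rightarrow> complex) \<Rightarrow> 'p vec \<Rightarrow> complex" where
  "mderivs [] f = f"
| "mderivs (u # us) f = mderiv u (mderivs us f)"

text \<open>Domain of the form: a = (a_0, ..., a_(r-2)) in (G^oplus)^(r-1) and
  d = (d_0, ..., d_(k-1)) with d_i in G_i (extensional tuples).\<close>
definition Adom :: "nat \<Rightarrow> nat \<Rightarrow> (nat \<Rightarrow> nat) \<Rightarrow> (nat \<Rightarrow> 'p::prime_card vec) set" where
  "Adom r k dims = PiE {..<r-1} (\<lambda>_. Gsum k dims)"

definition Ddom :: "nat \<Rightarrow> (nat \<Rightarrow> nat) \<Rightarrow> (nat \<Rightarrow> 'p::prime_card vec) set" where
  "Ddom k dims = PiE {..<k} (\<lambda>i. Gblock dims i)"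

definition multilinear_form ::
  "nat \<Rightarrow> nat \<Rightarrow> (nat \<Rightarrow> nat) \<Rightarrow> ((nat \<Rightarrow> 'p::prime_card vec) \<Rightarrow> (nat \<Rightarrow> 'p vec) \<Rightarrow> 'p mod_ring) \<Rightarrow> bool" where
  "multilinear_form r k dims psi \<longleftrightarrow>
     (\<forall>a\<in>Adom r k dims. \<forall>d\<in>Ddom k dims.
        (\<forall>m<r-1. \<forall>u\<in>Gsum k dims. \<forall>v\<in>Gsum k dims. \<forall>c.
           psi (a(m := vadd u v)) d = psi (a(m := u)) d + psi (a(m := v)) d \<and>
           psi (a(m := vscale c u)) d = c * psi (a(m := u)) d) \<and>
        (\<forall>m<k. \<forall>u\<in>Gblock dims m. \<forall>v\<in>Gblock dims m. \<forall>c.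
           psi a (d(m := vadd u v)) = psi a (d(m := u)) + psi a (d(m := v)) \<and>
           psi a (d(m := vscale c u)) = c * psi a (d(m := u))))"

definition bias ::
  "nat \<Rightarrow> nat \<Rightarrow> (nat \<Rightarrow> nat) \<Rightarrow> ((nat \<Rightarrow> 'p::prime_card vec) \<Rightarrow> (nat \<Rightarrow> 'p vec) \<Rightarrow> 'p mod_ring) \<Rightarrow> complex" where
  "bias r k dims psi = avg (Adom r k dims) (\<lambda>a. avg (Ddom k dims) (\<lambda>d. omega_pow (psi a d)))"

end

theory Submission imports Defs "HOL-Library.Function_Algebras" begin

lemma vadd_eq: "vadd x y = x + y" by (simp add: vadd_def plus_fun_def)

lemma Gsum_add: "x \<in> Gsum k dims \<Longrightarrow> y \<in> Gsum k dims \<Longrightarrow> x + y \<in> Gsum k dims"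
  by (auto simp: Gsum_def supp_space_def)
lemma Gsum_diff: "x \<in> Gsum k dims \<Longrightarrow> y \<in> Gsum k dims \<Longrightarrow> x - y \<in> Gsum k dims"
  by (auto simp: Gsum_def supp_space_def)
lemma Gsum_uminus: "x \<in> Gsum k dims \<Longrightarrow> - x \<in> Gsum k dims"
  by (auto simp: Gsum_def supp_space_def)
lemma Gsum_zero: "0 \<in> Gsum k dims"
  by (auto simp: Gsum_def supp_space_def)

lemma finite_Gsum: "finite (Gsum k dims :: 'p::prime_card vec set)"
proof -
  define S where "S = coords k dims"
  have fS: "finite S" unfolding S_def
  proof -
    have "coords k dims = Sigma {..<k} (\<lambda>i. {..<dims i})" by (auto simp: coords_def)
    thus "finite (coords k dims)" by auto
  qed
  have "Gsum k dims \<subseteq> (\<lambda>g j. if j \<in> S then g j else 0) ` (PiE S (\<lambda>_. (UNIV :: 'p mod_ring set)))"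
  proof
    fix x :: "'p vec" assume "x \<in> Gsum k dims"
    hence "x = (\<lambda>j. if j \<in> S then restrict x S j else 0)"
      by (auto simp: Gsum_def supp_space_def S_def)
    moreover have "restrict x S \<in> PiE S (\<lambda>_. UNIV)" by auto
    ultimately show "x \<in> (\<lambda>g j. if j \<in> S then g j else 0) ` (PiE S (\<lambda>_. UNIV))" by blast
  qed
  moreover have "finite (PiE S (\<lambda>_. (UNIV :: 'p mod_ring set)))" using fS by (intro finite_PiE) auto
  ultimately show ?thesis using finite_subset by blast
qed

lemma Gblock_sub: "m < k \<Longrightarrow> Gblock dims m \<subseteq> Gsum k dims"
  by (auto simp: Gblock_def Gsum_def supp_space_def coords_def)

lemma card_Gsum_pos: "card (Gsum k dims :: 'p::prime_card vec set) > 0"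
  using finite_Gsum Gsum_zero by (metis card_gt_0_iff empty_iff)

lemma to_int_range: "0 \<le> to_int_mod_ring (t::'p::prime_card mod_ring) \<and> to_int_mod_ring t < int CARD('p)"
  using range_to_int_mod_ring[where 'a='p] by (metis UNIV_I atLeastLessThan_iff image_eqI)

lemma omega_pow_cis: "omega_pow (t::'p::prime_card mod_ring) =
   cis (2 * pi * of_int (to_int_mod_ring t) / of_nat CARD('p))"
proof -
  have "exp (2 * pi * \<i> / of_nat CARD('p)) = cis (2 * pi / of_nat CARD('p))"
    by (simp add: cis_conv_exp mult.commute)
  hence "omega_pow t = cis (2 * pi / of_nat CARD('p)) ^ nat (to_int_mod_ring t)"
    by (simp add: omega_pow_def)
  also have "\<dots> = cis (real (nat (to_int_mod_ring t)) * (2 * pi / of_nat CARD('p)))"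
    by (rule Complex.DeMoivre)
  also have "real (nat (to_int_mod_ring t)) = of_int (to_int_mod_ring t)"
    using to_int_range[of t] by simp
  finally show ?thesis by (simp add: mult.commute)
qed

lemma cis_int_mult: "cis (2 * pi * of_int (m * int CARD('p::prime_card) + n) / of_nat CARD('p)) =
   cis (2 * pi * of_int n / of_nat CARD('p))"
proof -
  have p: "real CARD('p) > 0" by simp
  have "2 * pi * of_int (m * int CARD('p) + n) / of_nat CARD('p) = 2 * pi * of_int m + 2 * pi * of_int n / of_nat CARD('p)"
    using p by (simp add: field_simps)
  hence "cis (2 * pi * of_int (m * int CARD('p) + n) / of_nat CARD('p)) = cis (2 * pi * of_int m) * cis (2 * pi * of_int n / of_nat CARD('p))"
    by (simp only: cis_mult)
  moreover have "cis (2 * pi * of_int m) = 1"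
    by (metis cis_multiple_2pi Ints_of_int mult.commute)
  ultimately show ?thesis by simp
qed

lemma omega_pow_add: "omega_pow ((a::'p::prime_card mod_ring) + b) = omega_pow a * omega_pow b"
proof -
  define ta where "ta = to_int_mod_ring a"
  define tb where "tb = to_int_mod_ring b"
  have "to_int_mod_ring (a + b) = (ta + tb) mod int CARD('p)" by (simp add: to_int_mod_ring_add ta_def tb_def)
  moreover have "ta + tb = ((ta + tb) div int CARD('p)) * int CARD('p) + (ta + tb) mod int CARD('p)" by simp
  ultimately have "omega_pow (a + b) = cis (2 * pi * of_int (ta + tb) / of_nat CARD('p))"
    by (metis cis_int_mult omega_pow_cis)
  also have "\<dots> = cis (2 * pi * of_int ta / of_nat CARD('p)) * cis (2 * pi * of_int tb / of_nat CARD('p))"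
    by (simp add: cis_mult add_divide_distrib distrib_left)
  finally show ?thesis by (simp add: omega_pow_cis ta_def tb_def)
qed

lemma omega_pow_zero: "omega_pow (0::'p::prime_card mod_ring) = 1"
  by (simp add: omega_pow_def)

lemma norm_omega_pow: "norm (omega_pow (a::'p::prime_card mod_ring)) = 1"
  by (simp add: omega_pow_cis)

lemma omega_pow_uminus: "omega_pow (- (a::'p::prime_card mod_ring)) = cnj (omega_pow a)"
proof -
  have "omega_pow (- a) * omega_pow a = 1" by (metis omega_pow_add omega_pow_zero add.left_inverse)
  moreover have "cnj (omega_pow a) * omega_pow a = 1"
    using norm_omega_pow[of a] by (metis complex_norm_square mult.commute of_real_1 power_one)
  ultimately show ?thesis
    by (metis mult_cancel_right mult_zero_left zero_neq_one)
qed

lemma omega_pow_diff: "omega_pow ((a::'p::prime_card mod_ring) - b) = omega_pow a * cnj (omega_pow b)"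
  by (metis diff_conv_add_uminus omega_pow_add omega_pow_uminus)

lemma omega_pow_eq_1: "omega_pow (a::'p::prime_card mod_ring) = 1 \<Longrightarrow> a = 0"
proof -
  assume h: "omega_pow a = 1"
  define ta where "ta = to_int_mod_ring a"
  have r: "0 \<le> ta" "ta < int CARD('p)" using to_int_range[of a] by (auto simp: ta_def)
  have "Re (cis (2 * pi * of_int ta / of_nat CARD('p))) = 1"
    using h unfolding omega_pow_cis ta_def[symmetric] by simp
  hence "cos (2 * pi * of_int ta / of_nat CARD('p)) = 1" by simp
  then obtain n :: int where n0: "2 * pi * of_int ta / of_nat CARD('p) = of_int n * 2 * pi"
    using cos_one_2pi_int by blast
  hence n: "2 * pi * of_int ta / of_nat CARD('p) = of_int n * (2 * pi)" by simp
  have p: "real CARD('p) > 0" by simp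
  hence "of_int ta = of_int n * real CARD('p)" using n by (simp add: field_simps)
  hence "ta = n * int CARD('p)" by (metis of_int_eq_iff of_int_mult of_int_of_nat_eq)
  with r have "ta = 0"
    by (smt (verit, ccfv_SIG) mult_le_cancel_right1 mult_nonneg_nonpos of_nat_0_le_iff zero_less_mult_iff)
  thus "a = 0" unfolding ta_def by (metis of_int_mod_ring_to_int_mod_ring of_int_mod_ring_hom.hom_zero)
qed


lemma sum_shift:
  assumes "a \<in> Gsum k dims"
  shows "(\<Sum>y\<in>Gsum k dims. F (y + a)) = (\<Sum>y\<in>Gsum k dims. (F y :: 'b::comm_monoid_add))"
  by (rule sum.reindex_bij_witness[where i="\<lambda>y. y - a" and j="\<lambda>y. y + a"])
     (auto simp: assms Gsum_add Gsum_diff)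

lemma sum_shift':
  assumes "a \<in> Gsum k dims"
  shows "(\<Sum>y\<in>Gsum k dims. F (y - a)) = (\<Sum>y\<in>Gsum k dims. (F y :: 'b::comm_monoid_add))"
  using sum_shift[of "- a" k dims F] Gsum_uminus[OF assms] by simp

lemma sum_refl:
  assumes "a \<in> Gsum k dims"
  shows "(\<Sum>y\<in>Gsum k dims. F (a - y)) = (\<Sum>y\<in>Gsum k dims. (F y :: 'b::comm_monoid_add))"
  by (rule sum.reindex_bij_witness[where i="\<lambda>y. a - y" and j="\<lambda>y. a - y"])
     (auto simp: assms Gsum_add Gsum_diff)

lemma char_sum:
  fixes \<gamma> :: "'p::prime_card vec \<Rightarrow> 'p mod_ring"
  assumes add: "\<And>x y. x \<in> Gsum k dims \<Longrightarrow> y \<in> Gsum k dims \<Longrightarrow> \<gamma> (x + y) = \<gamma> x + \<gamma> y"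
  shows "(\<Sum>y\<in>Gsum k dims. omega_pow (\<gamma> y)) =
     (if \<forall>y\<in>Gsum k dims. \<gamma> y = 0 then of_nat (card (Gsum k dims :: 'p vec set)) else 0)"
proof (cases "\<forall>y\<in>Gsum k dims. \<gamma> y = 0")
  case True
  thus ?thesis by (simp add: omega_pow_zero)
next
  case False
  then obtain y0 where y0: "y0 \<in> Gsum k dims" "\<gamma> y0 \<noteq> 0" by blast
  define S where "S = (\<Sum>y\<in>Gsum k dims. omega_pow (\<gamma> y))"
  have "S = (\<Sum>y\<in>Gsum k dims. omega_pow (\<gamma> (y + y0)))"
    unfolding S_def by (rule sum_shift[symmetric, OF y0(1)])
  also have "\<dots> = (\<Sum>y\<in>Gsum k dims. omega_pow (\<gamma> y) * omega_pow (\<gamma> y0))"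
    by (intro sum.cong refl) (simp add: add y0 omega_pow_add)
  also have "\<dots> = S * omega_pow (\<gamma> y0)" by (simp add: S_def sum_distrib_right)
  finally have "S * (1 - omega_pow (\<gamma> y0)) = 0" by (simp add: algebra_simps)
  moreover have "omega_pow (\<gamma> y0) \<noteq> 1" using y0(2) omega_pow_eq_1 by blast
  ultimately have "S = 0" by simp
  thus ?thesis using False unfolding S_def by (subst if_not_P) auto
qed

lemma norm_sum_sq_le:
  fixes h :: "'a \<Rightarrow> complex"
  shows "norm (\<Sum>x\<in>S. h x)^2 \<le> real (card S) * (\<Sum>x\<in>S. norm (h x)^2)"
proof -
  have "norm (\<Sum>x\<in>S. h x) \<le> (\<Sum>x\<in>S. norm (h x))" by (rule norm_sum)
  hence "norm (\<Sum>x\<in>S. h x)^2 \<le> (\<Sum>x\<in>S. norm (h x))^2"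
    by (simp add: power_mono)
  also have "\<dots> \<le> (\<Sum>x\<in>S. norm (h x)^2) * real (card S)" by (rule sum_squared_le_sum_of_squares)
  finally show ?thesis by (simp add: mult.commute)
qed

lemma group_id1: "x + (y - x) + (z - x) = y + z - (x::'a::ab_group_add)" by (simp add: algebra_simps)
lemma group_id2: "y + (s - y) - x = s - (x::'a::ab_group_add)" by (simp add: algebra_simps)

lemma bilin_identity:
  fixes \<beta> :: "'p::prime_card vec \<Rightarrow> 'p vec \<Rightarrow> 'p mod_ring"
  assumes b1: "\<And>u v w. u \<in> Gsum k dims \<Longrightarrow> v \<in> Gsum k dims \<Longrightarrow> w \<in> Gsum k dims \<Longrightarrow> \<beta> (u + v) w = \<beta> u w + \<beta> v w"
    and b2: "\<And>u v w. u \<in> Gsum k dims \<Longrightarrow> v \<in> Gsum k dims \<Longrightarrow> w \<in> Gsum k dims \<Longrightarrow> \<beta> w (u + v) = \<beta> w u + \<beta> w v"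
    and m: "s \<in> Gsum k dims" "x \<in> Gsum k dims" "x' \<in> Gsum k dims" "y \<in> Gsum k dims"
  shows "\<beta> (y - x) (s - y - x) - \<beta> (y - x') (s - y - x') =
     (\<beta> x x - \<beta> x' x' - \<beta> x s + \<beta> x' s) + (\<beta> y (x' - x) - \<beta> (x' - x) y)"
proof -
  have d1: "\<beta> (u - v) w = \<beta> u w - \<beta> v w" if "u \<in> Gsum k dims" "v \<in> Gsum k dims" "w \<in> Gsum k dims" for u v w
  proof -
    have "\<beta> u w = \<beta> (u - v) w + \<beta> v w" using b1[of "u - v" v w] that Gsum_diff[OF that(1,2)] by simp
    thus ?thesis by (simp add: eq_diff_eq)
  qed
  have d2: "\<beta> w (u - v) = \<beta> w u - \<beta> w v" if "u \<in> Gsum k dims" "v \<in> Gsum k dims" "w \<in> Gsum k dims" for u v w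
  proof -
    have "\<beta> w u = \<beta> w (u - v) + \<beta> w v" using b2[of "u - v" v w] that Gsum_diff[OF that(1,2)] by simp
    thus ?thesis by (simp add: eq_diff_eq)
  qed
  have "s - y \<in> Gsum k dims" using m Gsum_diff by blast
  note mm = m this Gsum_diff[OF m(4) m(2)] Gsum_diff[OF m(4) m(3)] Gsum_diff[OF m(3) m(2)]
    Gsum_diff[OF this m(2)] Gsum_diff[OF this m(3)]
  show ?thesis by (simp only: d1 d2 mm) (simp add: algebra_simps)
qed


lemma antisym_sum:
  fixes \<beta> :: "'p::prime_card vec \<Rightarrow> 'p vec \<Rightarrow> 'p mod_ring"
  assumes b1: "\<And>u v w. u \<in> Gsum k dims \<Longrightarrow> v \<in> Gsum k dims \<Longrightarrow> w \<in> Gsum k dims \<Longrightarrow> \<beta> (u + v) w = \<beta> u w + \<beta> v w"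
    and b2: "\<And>u v w. u \<in> Gsum k dims \<Longrightarrow> v \<in> Gsum k dims \<Longrightarrow> w \<in> Gsum k dims \<Longrightarrow> \<beta> w (u + v) = \<beta> w u + \<beta> w v"
  shows "(\<Sum>u\<in>Gsum k dims. \<Sum>v\<in>Gsum k dims. omega_pow (\<beta> u v - \<beta> v u)) =
    of_real (\<Sum>v\<in>Gsum k dims. (if \<forall>y\<in>Gsum k dims. \<beta> y v - \<beta> v y = 0 then real (card (Gsum k dims :: 'p vec set)) else 0))"
proof -
  have "(\<Sum>u\<in>Gsum k dims. \<Sum>v\<in>Gsum k dims. omega_pow (\<beta> u v - \<beta> v u)) =
        (\<Sum>v\<in>Gsum k dims. \<Sum>u\<in>Gsum k dims. omega_pow (\<beta> u v - \<beta> v u))" by (rule sum.swap)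
  also have "\<dots> = (\<Sum>v\<in>Gsum k dims. of_real (if \<forall>y\<in>Gsum k dims. \<beta> y v - \<beta> v y = 0 then real (card (Gsum k dims :: 'p vec set)) else 0))"
  proof (intro sum.cong refl)
    fix v :: "'p vec" assume v: "v \<in> Gsum k dims"
    have "(\<Sum>u\<in>Gsum k dims. omega_pow (\<beta> u v - \<beta> v u)) =
       (if \<forall>y\<in>Gsum k dims. \<beta> y v - \<beta> v y = 0 then of_nat (card (Gsum k dims :: 'p vec set)) else 0)"
      by (rule char_sum) (simp add: b1 b2 v)
    thus "(\<Sum>u\<in>Gsum k dims. omega_pow (\<beta> u v - \<beta> v u)) =
       of_real (if \<forall>y\<in>Gsum k dims. \<beta> y v - \<beta> v y = 0 then real (card (Gsum k dims :: 'p vec set)) else 0)"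
      by simp
  qed
  also have "\<dots> = of_real (\<Sum>v\<in>Gsum k dims. (if \<forall>y\<in>Gsum k dims. \<beta> y v - \<beta> v y = 0 then real (card (Gsum k dims :: 'p vec set)) else 0))"
    by (rule of_real_sum[symmetric])
  finally show ?thesis .
qed

lemma core:
  fixes g :: "'p::prime_card vec \<Rightarrow> complex" and \<beta> :: "'p vec \<Rightarrow> 'p vec \<Rightarrow> 'p mod_ring"
  assumes gb: "\<And>x. x \<in> Gsum k dims \<Longrightarrow> norm (g x) \<le> 1"
    and b1: "\<And>u v w. u \<in> Gsum k dims \<Longrightarrow> v \<in> Gsum k dims \<Longrightarrow> w \<in> Gsum k dims \<Longrightarrow> \<beta> (u + v) w = \<beta> u w + \<beta> v w"
    and b2: "\<And>u v w. u \<in> Gsum k dims \<Longrightarrow> v \<in> Gsum k dims \<Longrightarrow> w \<in> Gsum k dims \<Longrightarrow> \<beta> w (u + v) = \<beta> w u + \<beta> w v"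
  shows "norm (\<Sum>u\<in>Gsum k dims. \<Sum>v\<in>Gsum k dims. \<Sum>x\<in>Gsum k dims.
            g (x + u + v) * cnj (g (x + u)) * cnj (g (x + v)) * g x * omega_pow (\<beta> u v))^2
     \<le> real (card (Gsum k dims :: 'p vec set))^4 *
        (\<Sum>v\<in>Gsum k dims. (if \<forall>y\<in>Gsum k dims. \<beta> y v - \<beta> v y = 0 then real (card (Gsum k dims :: 'p vec set)) else 0))"
proof -
  define G where "G = (Gsum k dims :: 'p vec set)"
  define N where "N = card G"
  have fG: "finite G" unfolding G_def by (rule finite_Gsum)
  have Gd: "a \<in> G \<Longrightarrow> b \<in> G \<Longrightarrow> a - b \<in> G" for a b unfolding G_def by (rule Gsum_diff)
  define F where "F = (\<lambda>u v x. g (x + u + v) * cnj (g (x + u)) * cnj (g (x + v)) * g x * omega_pow (\<beta> u v))"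
  define c where "c = (\<lambda>y z x. g (y + z - x) * g x * omega_pow (\<beta> (y - x) (z - x)))"
  define T where "T = (\<lambda>y z. \<Sum>x\<in>G. c y z x)"
  define rho where "rho = (\<lambda>v. if \<forall>y\<in>G. \<beta> y v - \<beta> v y = 0 then real N else 0)"
  define W where "W = (\<lambda>s x x'. g (s - x) * g x * cnj (g (s - x')) * cnj (g x') *
                         omega_pow (\<beta> x x - \<beta> x' x' - \<beta> x s + \<beta> x' s))"
  define R where "R = (\<lambda>h. \<Sum>y\<in>G. omega_pow (\<beta> y h - \<beta> h y))"
  have R_rho: "R h = of_real (rho h)" if "h \<in> G" for h
  proof -
    have "R h = (if \<forall>y\<in>G. \<beta> y h - \<beta> h y = 0 then of_nat N else 0)"
      unfolding R_def N_def G_def by (rule char_sum) (use that in \<open>simp add: b1 b2 G_def\<close>)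
    thus ?thesis by (simp add: rho_def)
  qed
  have rho_nn: "rho h \<ge> 0" for h by (simp add: rho_def)

  have "(\<Sum>u\<in>G. \<Sum>v\<in>G. \<Sum>x\<in>G. F u v x) = (\<Sum>u\<in>G. \<Sum>x\<in>G. \<Sum>v\<in>G. F u v x)"
    by (rule sum.cong[OF refl]) (rule sum.swap)
  also have "\<dots> = (\<Sum>x\<in>G. \<Sum>u\<in>G. \<Sum>v\<in>G. F u v x)" by (rule sum.swap)
  also have "\<dots> = (\<Sum>x\<in>G. \<Sum>y\<in>G. \<Sum>z\<in>G. F (y - x) (z - x) x)"
  proof (rule sum.cong[OF refl])
    fix x assume x: "x \<in> G"
    have xG: "x \<in> Gsum k dims" using x G_def by simp
    have "(\<Sum>u\<in>G. \<Sum>v\<in>G. F u v x) = (\<Sum>y\<in>G. \<Sum>v\<in>G. F (y - x) v x)"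
      unfolding G_def by (rule sum_shift'[OF xG, symmetric])
    also have "\<dots> = (\<Sum>y\<in>G. \<Sum>z\<in>G. F (y - x) (z - x) x)"
      unfolding G_def by (rule sum.cong[OF refl]) (rule sum_shift'[OF xG, symmetric])
    finally show "(\<Sum>u\<in>G. \<Sum>v\<in>G. F u v x) = (\<Sum>y\<in>G. \<Sum>z\<in>G. F (y - x) (z - x) x)" .
  qed
  also have "\<dots> = (\<Sum>y\<in>G. \<Sum>x\<in>G. \<Sum>z\<in>G. F (y - x) (z - x) x)" by (rule sum.swap)
  also have "\<dots> = (\<Sum>y\<in>G. \<Sum>z\<in>G. \<Sum>x\<in>G. F (y - x) (z - x) x)"
    by (rule sum.cong[OF refl]) (rule sum.swap)
  also have "\<dots> = (\<Sum>y\<in>G. \<Sum>z\<in>G. cnj (g y) * cnj (g z) * T y z)"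
    unfolding T_def sum_distrib_left
    by (intro sum.cong refl) (simp add: F_def c_def group_id1 algebra_simps)
  finally have step1: "(\<Sum>u\<in>G. \<Sum>v\<in>G. \<Sum>x\<in>G. F u v x) = (\<Sum>y\<in>G. \<Sum>z\<in>G. cnj (g y) * cnj (g z) * T y z)" .

  have step2: "norm (\<Sum>y\<in>G. \<Sum>z\<in>G. cnj (g y) * cnj (g z) * T y z) \<le> (\<Sum>y\<in>G. \<Sum>z\<in>G. norm (T y z))"
  proof -
    have "norm (\<Sum>y\<in>G. \<Sum>z\<in>G. cnj (g y) * cnj (g z) * T y z) \<le> (\<Sum>y\<in>G. norm (\<Sum>z\<in>G. cnj (g y) * cnj (g z) * T y z))"
      by (rule norm_sum)
    also have "\<dots> \<le> (\<Sum>y\<in>G. \<Sum>z\<in>G. norm (cnj (g y) * cnj (g z) * T y z))"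
      by (intro sum_mono norm_sum)
    also have "\<dots> \<le> (\<Sum>y\<in>G. \<Sum>z\<in>G. norm (T y z))"
    proof (intro sum_mono)
      fix y z assume "y \<in> G" "z \<in> G"
      hence "norm (g y) \<le> 1" "norm (g z) \<le> 1" using gb G_def by auto
      thus "norm (cnj (g y) * cnj (g z) * T y z) \<le> norm (T y z)"
        by (simp add: norm_mult mult_le_one mult_left_le_one_le)
    qed
    finally show ?thesis .
  qed

  have step3: "(\<Sum>y\<in>G. \<Sum>z\<in>G. norm (T y z))^2 \<le> real N ^ 2 * (\<Sum>y\<in>G. \<Sum>z\<in>G. norm (T y z)^2)"
  proof -
    have "(\<Sum>y\<in>G. \<Sum>z\<in>G. norm (T y z)) = (\<Sum>(y,z)\<in>G \<times> G. norm (T y z))" by (rule sum.cartesian_product)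
    moreover have "(\<Sum>y\<in>G. \<Sum>z\<in>G. norm (T y z)^2) = (\<Sum>(y,z)\<in>G \<times> G. norm (T y z)^2)" by (rule sum.cartesian_product)
    moreover have "(\<Sum>(y,z)\<in>G \<times> G. norm (T y z))^2 \<le> (\<Sum>p\<in>G \<times> G. (case p of (y,z) \<Rightarrow> norm (T y z))^2) * card (G \<times> G)"
      by (rule sum_squared_le_sum_of_squares)
    moreover have "card (G \<times> G) = N * N" by (simp add: N_def card_cartesian_product)
    moreover have "(\<Sum>p\<in>G \<times> G. (case p of (y,z) \<Rightarrow> norm (T y z))^2) = (\<Sum>(y,z)\<in>G \<times> G. norm (T y z)^2)"
      by (intro sum.cong refl) auto
    ultimately show ?thesis by (simp add: power2_eq_square mult.commute)
  qed

  define Q where "Q = (\<Sum>y\<in>G. \<Sum>z\<in>G. \<Sum>x\<in>G. \<Sum>x'\<in>G. c y z x * cnj (c y z x'))"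
  have step4: "of_real (\<Sum>y\<in>G. \<Sum>z\<in>G. norm (T y z)^2) = Q"
  proof -
    have "of_real (\<Sum>y\<in>G. \<Sum>z\<in>G. norm (T y z)^2) = (\<Sum>y\<in>G. \<Sum>z\<in>G. (of_real (norm (T y z)^2) :: complex))"
      by simp
    also have "\<dots> = (\<Sum>y\<in>G. \<Sum>z\<in>G. T y z * cnj (T y z))"
      by (simp only: complex_norm_square)
    also have "\<dots> = Q"
      unfolding Q_def T_def cnj_sum sum_product by simp
    finally show ?thesis .
  qed

  have pt: "c y (s - y) x * cnj (c y (s - y) x') = W s x x' * omega_pow (\<beta> y (x' - x) - \<beta> (x' - x) y)"
    if m: "s \<in> G" "x \<in> G" "x' \<in> G" "y \<in> G" for s x x' y
  proof -
    have e: "omega_pow (\<beta> (y - x) (s - y - x)) * cnj (omega_pow (\<beta> (y - x') (s - y - x'))) =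
        omega_pow (\<beta> x x - \<beta> x' x' - \<beta> x s + \<beta> x' s) * omega_pow (\<beta> y (x' - x) - \<beta> (x' - x) y)"
    proof -
      have "omega_pow (\<beta> (y - x) (s - y - x)) * cnj (omega_pow (\<beta> (y - x') (s - y - x'))) =
          omega_pow (\<beta> (y - x) (s - y - x) - \<beta> (y - x') (s - y - x'))" by (simp add: omega_pow_diff)
      also have "\<dots> = omega_pow ((\<beta> x x - \<beta> x' x' - \<beta> x s + \<beta> x' s) + (\<beta> y (x' - x) - \<beta> (x' - x) y))"
      proof -
        have "\<beta> (y - x) (s - y - x) - \<beta> (y - x') (s - y - x') =
          (\<beta> x x - \<beta> x' x' - \<beta> x s + \<beta> x' s) + (\<beta> y (x' - x) - \<beta> (x' - x) y)"
          by (rule bilin_identity[where k=k and dims=dims, OF b1 b2]) (use m in \<open>simp_all add: G_def\<close>)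
        thus ?thesis by (rule arg_cong)
      qed
      finally show ?thesis by (simp add: omega_pow_add)
    qed
    have "c y (s - y) x * cnj (c y (s - y) x') =
       g (s - x) * g x * cnj (g (s - x')) * cnj (g x') *
       (omega_pow (\<beta> (y - x) (s - y - x)) * cnj (omega_pow (\<beta> (y - x') (s - y - x'))))"
      by (simp add: c_def group_id2 mult_ac)
    also have "\<dots> = W s x x' * omega_pow (\<beta> y (x' - x) - \<beta> (x' - x) y)"
      unfolding e W_def by (simp add: mult_ac)
    finally show ?thesis .
  qed
  have step5: "Q = (\<Sum>s\<in>G. \<Sum>x\<in>G. \<Sum>x'\<in>G. W s x x' * R (x' - x))"
  proof -
    have "Q = (\<Sum>y\<in>G. \<Sum>s\<in>G. \<Sum>x\<in>G. \<Sum>x'\<in>G. c y (s - y) x * cnj (c y (s - y) x'))"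
      unfolding Q_def
    proof (rule sum.cong[OF refl])
      fix y assume "y \<in> G"
      hence yG: "y \<in> Gsum k dims" by (simp add: G_def)
      show "(\<Sum>z\<in>G. \<Sum>x\<in>G. \<Sum>x'\<in>G. c y z x * cnj (c y z x')) =
            (\<Sum>s\<in>G. \<Sum>x\<in>G. \<Sum>x'\<in>G. c y (s - y) x * cnj (c y (s - y) x'))"
        unfolding G_def by (rule sum_shift'[OF yG, symmetric])
    qed
    also have "\<dots> = (\<Sum>s\<in>G. \<Sum>y\<in>G. \<Sum>x\<in>G. \<Sum>x'\<in>G. c y (s - y) x * cnj (c y (s - y) x'))"
      by (rule sum.swap)
    also have "\<dots> = (\<Sum>s\<in>G. \<Sum>x\<in>G. \<Sum>y\<in>G. \<Sum>x'\<in>G. c y (s - y) x * cnj (c y (s - y) x'))"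
      by (rule sum.cong[OF refl]) (rule sum.swap)
    also have "\<dots> = (\<Sum>s\<in>G. \<Sum>x\<in>G. \<Sum>x'\<in>G. \<Sum>y\<in>G. c y (s - y) x * cnj (c y (s - y) x'))"
      by (rule sum.cong[OF refl], rule sum.cong[OF refl]) (rule sum.swap)
    also have "\<dots> = (\<Sum>s\<in>G. \<Sum>x\<in>G. \<Sum>x'\<in>G. \<Sum>y\<in>G. W s x x' * omega_pow (\<beta> y (x' - x) - \<beta> (x' - x) y))"
      by (intro sum.cong refl) (simp add: pt)
    also have "\<dots> = (\<Sum>s\<in>G. \<Sum>x\<in>G. \<Sum>x'\<in>G. W s x x' * R (x' - x))"
      unfolding R_def sum_distrib_left by simp
    finally show ?thesis .
  qed

  have step6: "norm Q \<le> real N * (real N * (\<Sum>h\<in>G. rho h))"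
  proof -
    have "norm Q \<le> (\<Sum>s\<in>G. norm (\<Sum>x\<in>G. \<Sum>x'\<in>G. W s x x' * R (x' - x)))"
      unfolding step5 by (rule norm_sum)
    also have "\<dots> \<le> (\<Sum>s\<in>G. \<Sum>x\<in>G. norm (\<Sum>x'\<in>G. W s x x' * R (x' - x)))"
      by (intro sum_mono norm_sum)
    also have "\<dots> \<le> (\<Sum>s\<in>G. \<Sum>x\<in>G. \<Sum>x'\<in>G. norm (W s x x' * R (x' - x)))"
      by (intro sum_mono norm_sum)
    also have "\<dots> \<le> (\<Sum>s\<in>G. \<Sum>x\<in>G. \<Sum>x'\<in>G. rho (x' - x))"
    proof (intro sum_mono)
      fix s x x' assume m: "s \<in> G" "x \<in> G" "x' \<in> G"
      have n1: "norm (g (s - x)) \<le> 1" "norm (g x) \<le> 1" "norm (g (s - x')) \<le> 1" "norm (g x') \<le> 1"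
        using gb m Gd unfolding G_def by auto
      have "norm (W s x x') \<le> 1"
        unfolding W_def using n1 by (simp add: norm_mult norm_omega_pow mult_le_one)
      moreover have "norm (R (x' - x)) = rho (x' - x)"
        using R_rho[OF Gd[OF m(3) m(2)]] rho_nn by simp
      ultimately show "norm (W s x x' * R (x' - x)) \<le> rho (x' - x)"
        by (simp add: norm_mult mult_left_le_one_le rho_nn)
    qed
    also have "\<dots> = (\<Sum>s\<in>G. \<Sum>x\<in>G. \<Sum>h\<in>G. rho h)"
    proof -
      have sh: "(\<Sum>x'\<in>G. rho (x' - x)) = (\<Sum>h\<in>G. rho h)" if "x \<in> G" for x
      proof -
        have xG: "x \<in> Gsum k dims" using that by (simp add: G_def)
        show ?thesis unfolding G_def by (rule sum_shift'[OF xG])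
      qed
      show ?thesis by (rule sum.cong[OF refl], rule sum.cong[OF refl], rule sh)
    qed
    also have "\<dots> = real N * (real N * (\<Sum>h\<in>G. rho h))" by (simp add: N_def)
    finally show ?thesis .
  qed

  have step7: "(\<Sum>y\<in>G. \<Sum>z\<in>G. norm (T y z)^2) \<le> norm Q"
  proof -
    have "norm Q = \<bar>\<Sum>y\<in>G. \<Sum>z\<in>G. norm (T y z)^2\<bar>" unfolding step4[symmetric] by (rule norm_of_real)
    thus ?thesis by linarith
  qed

  have "norm (\<Sum>u\<in>G. \<Sum>v\<in>G. \<Sum>x\<in>G. F u v x)^2 \<le> (\<Sum>y\<in>G. \<Sum>z\<in>G. norm (T y z))^2"
    unfolding step1 using step2 by (simp add: power_mono)
  also have "\<dots> \<le> real N ^ 2 * (\<Sum>y\<in>G. \<Sum>z\<in>G. norm (T y z)^2)" by (rule step3)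
  also have "\<dots> \<le> real N ^ 2 * (real N * (real N * (\<Sum>h\<in>G. rho h)))"
    using step6 step7 by (intro mult_left_mono) auto
  also have "\<dots> = real N ^ 4 * (\<Sum>h\<in>G. rho h)" by (simp add: power_def)
  finally show ?thesis unfolding F_def rho_def N_def G_def .
qed


lemma mderiv_comm: "mderiv u (mderiv w h) = mderiv w (mderiv u h)"
  by (rule ext) (simp add: mderiv_def vadd_eq add_ac mult_ac)

lemma mderivs_mid: "mderivs (xs @ w # ys) h = mderiv w (mderivs (xs @ ys) h)"
  by (induction xs) (simp_all add: mderiv_comm)

lemma mderiv2: "mderiv u (mderiv v h) x = h (x + u + v) * cnj (h (x + u)) * cnj (h (x + v)) * h x"
  by (simp add: mderiv_def vadd_eq)

lemma mderivs_bound: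
  assumes "\<forall>w\<in>set l. w \<in> Gsum k dims" "\<forall>x\<in>Gsum k dims. norm (h x) \<le> 1"
  shows "x \<in> Gsum k dims \<Longrightarrow> norm (mderivs l h x) \<le> 1"
  using assms(1)
proof (induction l arbitrary: x)
  case Nil
  then show ?case using assms(2) by simp
next
  case (Cons w l)
  have xw: "x + w \<in> Gsum k dims" using Cons.prems by (simp add: Gsum_add)
  have "\<forall>w\<in>set l. w \<in> Gsum k dims" using Cons.prems(2) by simp
  hence A: "norm (mderivs l h (vadd x w)) \<le> 1" "norm (mderivs l h x) \<le> 1"
    unfolding vadd_eq using Cons.IH[OF xw] Cons.IH[OF Cons.prems(1)] by blast+
  have "mderivs (w # l) h x = mderivs l h (vadd x w) * cnj (mderivs l h x)" by (simp add: mderiv_def)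
  hence "norm (mderivs (w # l) h x) = norm (mderivs l h (vadd x w)) * norm (mderivs l h x)"
    by (simp only: norm_mult complex_mod_cnj)
  thus ?case using A mult_le_one norm_ge_zero by metis
qed

lemma upt_split2: "i < j \<Longrightarrow> j < n \<Longrightarrow> [0..<n] = [0..<i] @ i # [Suc i..<j] @ j # [Suc j..<n]"
proof -
  assume ij: "i < j" "j < n"
  have "[0..<n] = [0..<i] @ [i..<n]" using upt_add_eq_append[of 0 i "n - i"] ij by simp
  also have "[i..<n] = i # [Suc i..<n]" using ij by (simp add: upt_conv_Cons)
  also have "[Suc i..<n] = [Suc i..<j] @ [j..<n]" using upt_add_eq_append[of "Suc i" j "n - j"] ij by simp
  also have "[j..<n] = j # [Suc j..<n]" using ij by (simp add: upt_conv_Cons)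
  finally show ?thesis by simp
qed

lemma avg_swap: "avg S (\<lambda>x. avg T (\<lambda>y. h x y)) = avg T (\<lambda>y. avg S (\<lambda>x. h x y))"
proof -
  have "avg S (\<lambda>x. avg T (\<lambda>y. h x y)) = (\<Sum>x\<in>S. \<Sum>y\<in>T. h x y) / (of_nat (card T) * of_nat (card S))"
    unfolding avg_def by (simp add: sum_divide_distrib)
  also have "\<dots> = (\<Sum>y\<in>T. \<Sum>x\<in>S. h x y) / (of_nat (card S) * of_nat (card T))"
    by (subst sum.swap) (simp only: mult.commute)
  also have "\<dots> = avg T (\<lambda>y. avg S (\<lambda>x. h x y))"
    unfolding avg_def by (simp add: sum_divide_distrib)
  finally show ?thesis .
qed

lemma avg_upd:
  fixes F :: "('a \<Rightarrow> 'b) \<Rightarrow> complex"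
  assumes "m \<in> I"
  shows "avg (PiE I S) F = avg (PiE I S) (\<lambda>a. avg (S m) (\<lambda>t. F (a(m := t))))"
proof -
  define P where "P = PiE I S"
  define \<phi> :: "('a \<Rightarrow> 'b) \<times> 'b \<Rightarrow> ('a \<Rightarrow> 'b) \<times> 'b" where "\<phi> = (\<lambda>(a, t). (a(m := t), a m))"
  have upd: "a(m := t) \<in> P" if "a \<in> P" "t \<in> S m" for a t
    using PiE_fun_upd[of t S m a I] that assms insert_absorb[OF assms] by (simp add: P_def)
  have mem: "a m \<in> S m" if "a \<in> P" for a using PiE_mem[of a I S m] that assms by (simp add: P_def)
  have "(\<Sum>p\<in>P \<times> S m. F (fst (\<phi> p))) = (\<Sum>p\<in>P \<times> S m. F (fst p))"
  proof -
    have inv: "\<phi> (\<phi> p) = p" and memb: "\<phi> p \<in> P \<times> S m" if pm: "p \<in> P \<times> S m" for p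
    proof -
      obtain a t where p: "p = (a, t)" "a \<in> P" "t \<in> S m" using pm by blast
      show "\<phi> (\<phi> p) = p" by (simp add: \<phi>_def p)
      show "\<phi> p \<in> P \<times> S m" using upd[OF p(2,3)] mem[OF p(2)] by (simp add: \<phi>_def p)
    qed
    show ?thesis
      by (rule sum.reindex_bij_witness[where i=\<phi> and j=\<phi>]) (erule inv | erule memb | rule refl)+
  qed
  hence h1: "(\<Sum>p\<in>P \<times> S m. F ((fst p)(m := snd p))) = (\<Sum>p\<in>P \<times> S m. F (fst p))"
    by (simp add: \<phi>_def case_prod_beta)
  have eq: "(\<Sum>a\<in>P. \<Sum>t\<in>S m. F (a(m := t))) = of_nat (card (S m)) * (\<Sum>a\<in>P. F a)"
  proof -
    have "(\<Sum>a\<in>P. \<Sum>t\<in>S m. F (a(m := t))) = (\<Sum>p\<in>P \<times> S m. F ((fst p)(m := snd p)))"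
      by (simp add: sum.cartesian_product case_prod_beta)
    also have "\<dots> = (\<Sum>p\<in>P \<times> S m. F (fst p))" by (rule h1)
    also have "\<dots> = (\<Sum>a\<in>P. \<Sum>t\<in>S m. F a)" by (simp only: sum.cartesian_product' fst_conv)
    also have "\<dots> = of_nat (card (S m)) * (\<Sum>a\<in>P. F a)" by (simp add: sum_distrib_left)
    finally show ?thesis .
  qed
  show ?thesis
  proof (cases "card (S m) = 0")
    case True
    show ?thesis
    proof (cases "P = {}")
      case True thus ?thesis by (simp add: avg_def P_def)
    next
      case False
      then obtain a where "a \<in> P" by blast
      hence "a m \<in> S m" using assms by (auto simp: P_def)
      hence "S m \<noteq> {}" by blast
      have "infinite (S m)" using True \<open>S m \<noteq> {}\<close> by auto
      have inj: "inj_on (\<lambda>t. a(m := t)) (S m)" by (rule inj_onI) (metis fun_upd_same)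
      have sub: "(\<lambda>t. a(m := t)) ` S m \<subseteq> P" using upd \<open>a \<in> P\<close> by auto
      have "infinite P"
      proof
        assume "finite P"
        hence "finite ((\<lambda>t. a(m := t)) ` S m)" using sub finite_subset by blast
        hence "finite (S m)" using finite_imageD inj by blast
        thus False using \<open>infinite (S m)\<close> by blast
      qed
      hence "card P = 0" by simp
      thus ?thesis by (simp add: avg_def P_def)
    qed
  next
    case False
    have "avg P (\<lambda>a. avg (S m) (\<lambda>t. F (a(m := t)))) = (\<Sum>a\<in>P. \<Sum>t\<in>S m. F (a(m := t))) / of_nat (card (S m)) / of_nat (card P)"
      by (simp add: avg_def sum_divide_distrib)
    also have "\<dots> = avg P F" using False by (simp add: eq avg_def)
    finally show ?thesis by (simp add: P_def)
  qed
qed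


lemma avg_swap3: "avg S (\<lambda>v. avg T (\<lambda>u. avg U (\<lambda>d. h v u d))) = avg U (\<lambda>d. avg S (\<lambda>v. avg T (\<lambda>u. h v u d)))"
proof -
  have "avg S (\<lambda>v. avg T (\<lambda>u. avg U (\<lambda>d. h v u d))) = avg S (\<lambda>v. avg U (\<lambda>d. avg T (\<lambda>u. h v u d)))"
    by (rule arg_cong[where f="avg S"], rule ext, rule avg_swap)
  also have "\<dots> = avg U (\<lambda>d. avg S (\<lambda>v. avg T (\<lambda>u. h v u d)))" by (rule avg_swap)
  finally show ?thesis .
qed

lemma avg3: "avg S (\<lambda>v. avg S (\<lambda>u. avg S (\<lambda>x. h v u x))) = (\<Sum>v\<in>S. \<Sum>u\<in>S. \<Sum>x\<in>S. h v u x) / of_nat (card S) ^ 3"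
  unfolding avg_def by (simp add: sum_divide_distrib[symmetric] power3_eq_cube divide_divide_eq_left mult_ac)

lemma avg2: "avg S (\<lambda>v. avg S (\<lambda>u. h v u)) = (\<Sum>v\<in>S. \<Sum>u\<in>S. h v u) / of_nat (card S) ^ 2"
  unfolding avg_def by (simp add: sum_divide_distrib[symmetric] power2_eq_square divide_divide_eq_left mult_ac)

lemma norm_avg_sq: "norm (avg S h)^2 \<le> (\<Sum>x\<in>S. norm (h x)^2) / real (card S)"
proof (cases "card S = 0")
  case True thus ?thesis by (simp add: avg_def)
next
  case False
  have "norm (avg S h)^2 = norm (\<Sum>x\<in>S. h x)^2 / real (card S)^2"
    by (simp add: avg_def norm_divide power_divide)
  also have "\<dots> \<le> (real (card S) * (\<Sum>x\<in>S. norm (h x)^2)) / real (card S)^2"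
    by (intro divide_right_mono norm_sum_sq_le) simp
  also have "\<dots> = (\<Sum>x\<in>S. norm (h x)^2) / real (card S)" using False by (simp add: power2_eq_square)
  finally show ?thesis .
qed

lemma avg_of_real: "avg S (\<lambda>x. of_real (q x)) = of_real ((\<Sum>x\<in>S. q x) / real (card S))"
  by (simp add: avg_def)

lemma ravg_mono: "(\<And>x. x \<in> S \<Longrightarrow> f x \<le> g x) \<Longrightarrow> (\<Sum>x\<in>S. f x) / real (card S) \<le> (\<Sum>x\<in>S. (g x :: real)) / real (card S)"
  by (intro divide_right_mono sum_mono) auto

lemma ravg_le1: "(\<And>x. x \<in> S \<Longrightarrow> f x \<le> 1) \<Longrightarrow> (\<Sum>x\<in>S. (f x :: real)) / real (card S) \<le> 1"
proof -
  assume h: "\<And>x. x \<in> S \<Longrightarrow> f x \<le> 1"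
  have "(\<Sum>x\<in>S. f x) \<le> real (card S)" using sum_mono[of S f "\<lambda>_. 1"] h by simp
  thus ?thesis by (cases "card S = 0") (auto simp: divide_le_eq_1)
qed

lemma upd_in_Adom: "a \<in> Adom r k dims \<Longrightarrow> m < r - 1 \<Longrightarrow> u \<in> Gsum k dims \<Longrightarrow> a(m := u) \<in> Adom r k dims"
  unfolding Adom_def using PiE_fun_upd[of u "\<lambda>_. Gsum k dims" m a "{..<r-1}"] by (simp add: insert_absorb)

lemma Adom_mem: "a \<in> Adom r k dims \<Longrightarrow> m < r - 1 \<Longrightarrow> a m \<in> Gsum k dims"
  unfolding Adom_def using PiE_mem[of a "{..<r-1}" "\<lambda>_. Gsum k dims" m] by simp

lemma Ddom_mem: "d \<in> Ddom k dims \<Longrightarrow> m < k \<Longrightarrow> d m \<in> Gsum k dims"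
  unfolding Ddom_def using Gblock_sub PiE_mem by fastforce

lemma mderivs_extract:
  assumes "i < j" "j < n"
  shows "mderivs (map (a(j := v, i := u)) [0..<n] @ ds) h =
    mderiv u (mderiv v (mderivs (map a [0..<i] @ map a [Suc i..<j] @ map a [Suc j..<n] @ ds) h))"
proof -
  have "map (a(j := v, i := u)) [0..<n] = map a [0..<i] @ u # map a [Suc i..<j] @ v # map a [Suc j..<n]"
    using assms by (simp add: upt_split2[OF assms])
  hence "mderivs (map (a(j := v, i := u)) [0..<n] @ ds) h =
     mderivs (map a [0..<i] @ u # (map a [Suc i..<j] @ v # map a [Suc j..<n] @ ds)) h" by simp
  also have "\<dots> = mderiv u (mderivs ((map a [0..<i] @ map a [Suc i..<j]) @ v # (map a [Suc j..<n] @ ds)) h)"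
    by (simp add: mderivs_mid)
  also have "\<dots> = mderiv u (mderiv v (mderivs ((map a [0..<i] @ map a [Suc i..<j]) @ (map a [Suc j..<n] @ ds)) h))"
    by (simp only: mderivs_mid)
  finally show ?thesis by simp
qed


lemma avg_cong: "(\<And>x. x \<in> S \<Longrightarrow> f x = g x) \<Longrightarrow> avg S f = avg S g"
  unfolding avg_def by (metis sum.cong)

theorem proposition27:
  fixes k r :: nat and dims :: "nat \<Rightarrow> nat"
    and f :: "'p::prime_card vec \<Rightarrow> complex"
    and \<xi> :: real
    and \<psi> :: "(nat \<Rightarrow> 'p vec) \<Rightarrow> (nat \<Rightarrow> 'p vec) \<Rightarrow> 'p mod_ring"
    and i j :: nat
  assumes "k \<ge> 1" and "r \<ge> 1"
    and "\<forall>x\<in>Gsum k dims. norm (f x) \<le> 1"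
    and "\<xi> > 0"
    and "multilinear_form r k dims \<psi>"
    and hyp: "let E = avg (Adom r k dims) (\<lambda>a. avg (Ddom k dims) (\<lambda>d. avg (Gsum k dims) (\<lambda>x.
                 mderivs (map a [0..<r-1] @ map d [0..<k]) f x * omega_pow (\<psi> a d))))
              in Im E = 0 \<and> Re E \<ge> \<xi>"
    and "i < j" and "j < r - 1"
  shows "let B = bias r k dims (\<lambda>a d. \<psi> a d - \<psi> (a \<circ> Transposition.transpose i j) d)
         in Im B = 0 \<and> Re B \<ge> \<xi> ^ 8"
  proof -
  define G where "G = (Gsum k dims :: 'p vec set)"
  define A where "A = (Adom r k dims :: (nat \<Rightarrow> 'p vec) set)"
  define D where "D = (Ddom k dims :: (nat \<Rightarrow> 'p vec) set)"
  define N where "N = card G"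
  have Npos: "N > 0" unfolding N_def G_def by (rule card_Gsum_pos)
  have ij: "i \<noteq> j" "i < r - 1" "j < r - 1" using assms by auto
  define rest where "rest = (\<lambda>(a::nat \<Rightarrow> 'p vec) (d::nat \<Rightarrow> 'p vec). map a [0..<i] @ map a [Suc i..<j] @ map a [Suc j..<r-1] @ map d [0..<k])"
  define g where "g = (\<lambda>a d. mderivs (rest a d) f)"
  define \<beta> where "\<beta> = (\<lambda>a d u v. \<psi> (a(j := v, i := u)) d)"
  define \<Phi>s where "\<Phi>s = (\<lambda>a d. \<Sum>u\<in>G. \<Sum>v\<in>G. \<Sum>x\<in>G. g a d (x + u + v) * cnj (g a d (x + u)) * cnj (g a d (x + v)) * g a d x * omega_pow (\<beta> a d u v))"
  define P where "P = (\<lambda>a d. \<Sum>v\<in>G. (if \<forall>y\<in>G. \<beta> a d y v - \<beta> a d v y = 0 then real N else 0))"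
  define q where "q = (\<lambda>a d. P a d / real N ^ 2)"

  have reshuffle: "avg A (\<lambda>a. avg D (\<lambda>d. X a d)) = avg A (\<lambda>a. avg D (\<lambda>d. avg G (\<lambda>v. avg G (\<lambda>u. X (a(j := v, i := u)) d))))"
    for X :: "(nat \<Rightarrow> 'p vec) \<Rightarrow> (nat \<Rightarrow> 'p vec) \<Rightarrow> complex"
  proof -
    define H where "H = (\<lambda>a. avg D (\<lambda>d. X a d))"
    have AP: "A = PiE {..<r-1} (\<lambda>_. G)" by (simp add: A_def Adom_def G_def)
    have "avg A H = avg A (\<lambda>a. avg G (\<lambda>u. H (a(i := u))))"
      unfolding AP using avg_upd[of i "{..<r-1}" "\<lambda>_. G" H] ij by simp
    also have "\<dots> = avg A (\<lambda>a. avg G (\<lambda>v. avg G (\<lambda>u. H (a(j := v, i := u)))))"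
      unfolding AP using avg_upd[of j "{..<r-1}" "\<lambda>_. G" "\<lambda>a. avg G (\<lambda>u. H (a(i := u)))"] ij by simp
    also have "\<dots> = avg A (\<lambda>a. avg D (\<lambda>d. avg G (\<lambda>v. avg G (\<lambda>u. X (a(j := v, i := u)) d))))"
      unfolding H_def by (rule arg_cong[where f="avg A"], rule ext, rule avg_swap3)
    finally show ?thesis unfolding H_def .
  qed

  have ML1: "\<psi> (a(m := vadd u v)) d = \<psi> (a(m := u)) d + \<psi> (a(m := v)) d"
    if "a \<in> A" "d \<in> D" "m < r - 1" "u \<in> G" "v \<in> G" for a d m u v
  proof -
    note mf1 = assms(5)[unfolded multilinear_form_def, rule_format, THEN conjunct1, rule_format, THEN conjunct1]
    show ?thesis by (rule mf1) (use that in \<open>simp_all add: A_def D_def G_def\<close>)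
  qed
  have b1: "\<beta> a d (u + u') w = \<beta> a d u w + \<beta> a d u' w"
    if "a \<in> A" "d \<in> D" "u \<in> G" "u' \<in> G" "w \<in> G" for a d u u' w
  proof -
    have "a(j := w) \<in> A" using upd_in_Adom that ij unfolding A_def G_def by blast
    from ML1[OF this that(2) ij(2) that(3) that(4)] show ?thesis by (simp add: \<beta>_def vadd_eq)
  qed
  have b2: "\<beta> a d w (u + u') = \<beta> a d w u + \<beta> a d w u'"
    if "a \<in> A" "d \<in> D" "u \<in> G" "u' \<in> G" "w \<in> G" for a d u u' w
  proof -
    have "a(i := w) \<in> A" using upd_in_Adom that ij unfolding A_def G_def by blast
    from ML1[OF this that(2) ij(3) that(3) that(4)] show ?thesis
      by (simp add: \<beta>_def vadd_eq fun_upd_twist[OF ij(1)])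
  qed
  have gb: "norm (g a d x) \<le> 1" if "a \<in> A" "d \<in> D" "x \<in> G" for a d x
  proof -
    have "\<forall>w\<in>set (rest a d). w \<in> Gsum k dims"
      using that ij Adom_mem[of a r k dims] Ddom_mem[of d k dims] unfolding rest_def A_def D_def
      by auto
    thus ?thesis unfolding g_def using mderivs_bound assms(3) that(3) G_def by blast
  qed

  have core_ad: "norm (\<Phi>s a d)^2 \<le> real N ^ 4 * P a d" if "a \<in> A" "d \<in> D" for a d
    unfolding \<Phi>s_def P_def N_def G_def
    by (rule core) (use that gb b1 b2 in \<open>auto simp: G_def\<close>)

  define E where "E = avg A (\<lambda>a. avg D (\<lambda>d. avg G (\<lambda>x.
                 mderivs (map a [0..<r-1] @ map d [0..<k]) f x * omega_pow (\<psi> a d))))"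
  have hypE: "Im E = 0 \<and> Re E \<ge> \<xi>" using hyp unfolding Let_def E_def A_def D_def G_def .
  have E_eq: "E = avg A (\<lambda>a. avg D (\<lambda>d. \<Phi>s a d / of_nat N ^ 3))"
  proof -
    have "E = avg A (\<lambda>a. avg D (\<lambda>d. avg G (\<lambda>v. avg G (\<lambda>u. avg G (\<lambda>x.
                 mderivs (map (a(j := v, i := u)) [0..<r-1] @ map d [0..<k]) f x * omega_pow (\<psi> (a(j := v, i := u)) d))))))"
      unfolding E_def by (rule reshuffle)
    also have "\<dots> = avg A (\<lambda>a. avg D (\<lambda>d. \<Phi>s a d / of_nat N ^ 3))"
    proof (rule avg_cong, rule avg_cong)
      fix a d assume ad: "a \<in> A" "d \<in> D"
      have "avg G (\<lambda>v. avg G (\<lambda>u. avg G (\<lambda>x.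
                 mderivs (map (a(j := v, i := u)) [0..<r-1] @ map d [0..<k]) f x * omega_pow (\<psi> (a(j := v, i := u)) d))))
          = avg G (\<lambda>v. avg G (\<lambda>u. avg G (\<lambda>x. g a d (x + u + v) * cnj (g a d (x + u)) * cnj (g a d (x + v)) * g a d x * omega_pow (\<beta> a d u v))))"
      proof -
        have ex: "mderivs (map (a(j := v, i := u)) [0..<r-1] @ map d [0..<k]) f = mderiv u (mderiv v (g a d))" for u v
          unfolding g_def rest_def by (rule mderivs_extract[OF assms(7) ij(3)])
        show ?thesis by (simp only: ex mderiv2 \<beta>_def)
      qed
      also have "\<dots> = (\<Sum>v\<in>G. \<Sum>u\<in>G. \<Sum>x\<in>G. g a d (x + u + v) * cnj (g a d (x + u)) * cnj (g a d (x + v)) * g a d x * omega_pow (\<beta> a d u v)) / of_nat N ^ 3"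
        unfolding N_def by (rule avg3)
      also have "\<dots> = \<Phi>s a d / of_nat N ^ 3"
        unfolding \<Phi>s_def by (subst sum.swap) (rule refl)
      finally show "avg G (\<lambda>v. avg G (\<lambda>u. avg G (\<lambda>x.
                 mderivs (map (a(j := v, i := u)) [0..<r-1] @ map d [0..<k]) f x * omega_pow (\<psi> (a(j := v, i := u)) d))))
          = \<Phi>s a d / of_nat N ^ 3" .
    qed
    finally show ?thesis .
  qed

  define RB where "RB = (\<Sum>a\<in>A. (\<Sum>d\<in>D. q a d) / real (card D)) / real (card A)"
  have B_eq: "bias r k dims (\<lambda>a d. \<psi> a d - \<psi> (a \<circ> Transposition.transpose i j) d) = of_real RB"
  proof -
    have swp: "(a(j := v, i := u)) \<circ> Transposition.transpose i j = a(j := u, i := v)" for a :: "nat \<Rightarrow> 'p vec" and u v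
      using ij(1) by (auto simp: fun_eq_iff Transposition.transpose_def)
    have "bias r k dims (\<lambda>a d. \<psi> a d - \<psi> (a \<circ> Transposition.transpose i j) d) =
        avg A (\<lambda>a. avg D (\<lambda>d. omega_pow (\<psi> a d - \<psi> (a \<circ> Transposition.transpose i j) d)))"
      by (simp add: bias_def A_def D_def)
    also have "\<dots> = avg A (\<lambda>a. avg D (\<lambda>d. avg G (\<lambda>v. avg G (\<lambda>u.
        omega_pow (\<psi> (a(j := v, i := u)) d - \<psi> ((a(j := v, i := u)) \<circ> Transposition.transpose i j) d)))))"
      by (rule reshuffle)
    also have "\<dots> = avg A (\<lambda>a. avg D (\<lambda>d. of_real (q a d)))"
    proof (rule avg_cong, rule avg_cong)
      fix a d assume ad: "a \<in> A" "d \<in> D"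
      have "avg G (\<lambda>v. avg G (\<lambda>u.
        omega_pow (\<psi> (a(j := v, i := u)) d - \<psi> ((a(j := v, i := u)) \<circ> Transposition.transpose i j) d)))
        = avg G (\<lambda>v. avg G (\<lambda>u. omega_pow (\<beta> a d u v - \<beta> a d v u)))"
        by (simp add: swp \<beta>_def)
      also have "\<dots> = (\<Sum>v\<in>G. \<Sum>u\<in>G. omega_pow (\<beta> a d u v - \<beta> a d v u)) / of_nat N ^ 2"
        unfolding N_def by (rule avg2)
      also have "\<dots> = (\<Sum>u\<in>G. \<Sum>v\<in>G. omega_pow (\<beta> a d u v - \<beta> a d v u)) / of_nat N ^ 2"
        by (subst sum.swap) (rule refl)
      also have "(\<Sum>u\<in>G. \<Sum>v\<in>G. omega_pow (\<beta> a d u v - \<beta> a d v u)) = of_real (P a d)"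
        unfolding P_def N_def G_def
        by (rule antisym_sum) (use ad b1 b2 in \<open>auto simp: G_def\<close>)
      also have "of_real (P a d) / of_nat N ^ 2 = (of_real (q a d) :: complex)" by (simp add: q_def)
      finally show "avg G (\<lambda>v. avg G (\<lambda>u.
        omega_pow (\<psi> (a(j := v, i := u)) d - \<psi> ((a(j := v, i := u)) \<circ> Transposition.transpose i j) d)))
        = of_real (q a d)" .
    qed
    also have "\<dots> = of_real RB"
      by (simp only: avg_of_real RB_def)
    finally show ?thesis .
  qed

  have phi_le: "norm (\<Phi>s a d / of_nat N ^ 3)^2 \<le> q a d" if "a \<in> A" "d \<in> D" for a d
  proof -
    have "norm (\<Phi>s a d / of_nat N ^ 3)^2 = norm (\<Phi>s a d)^2 / real N ^ 6"
      by (simp add: norm_divide power_divide norm_power flip: power_mult)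
    also have "\<dots> \<le> real N ^ 4 * P a d / real N ^ 6"
      by (intro divide_right_mono core_ad that) simp
    also have "\<dots> = q a d" using Npos by (simp add: q_def power_def field_simps)
    finally show ?thesis .
  qed
  have q_le1: "q a d \<le> 1" for a d
  proof -
    have "P a d \<le> (\<Sum>v\<in>G. real N)" unfolding P_def by (intro sum_mono) auto
    also have "\<dots> = real N * real N" by (simp add: N_def)
    finally show ?thesis using Npos by (simp add: q_def power2_eq_square divide_le_eq_1)
  qed
  have normE: "norm E ^ 2 \<le> RB"
  proof -
    have "norm E ^ 2 \<le> (\<Sum>a\<in>A. norm (avg D (\<lambda>d. \<Phi>s a d / of_nat N ^ 3))^2) / real (card A)"
      unfolding E_eq by (rule norm_avg_sq)
    also have "\<dots> \<le> (\<Sum>a\<in>A. (\<Sum>d\<in>D. norm (\<Phi>s a d / of_nat N ^ 3)^2) / real (card D)) / real (card A)"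
      by (rule ravg_mono) (rule norm_avg_sq)
    also have "\<dots> \<le> RB" unfolding RB_def
      by (intro ravg_mono) (use phi_le in auto)
    finally show ?thesis .
  qed
  have RB1: "RB \<le> 1" unfolding RB_def by (intro ravg_le1) (use q_le1 in auto)
  have "\<xi> \<le> norm E" using hypE complex_Re_le_cmod[of E] by linarith
  hence xi2: "\<xi>^2 \<le> RB" using normE assms(4) by (meson less_imp_le order_trans power_mono)
  have "\<xi> \<le> 1"
  proof (rule ccontr)
    assume "\<not> \<xi> \<le> 1"
    hence "1 < \<xi>^2" by (intro one_less_power) auto
    thus False using xi2 RB1 by linarith
  qed
  hence x8: "\<xi>^8 \<le> \<xi>^2" using assms(4) by (intro power_decreasing) auto
  have "Im (of_real RB :: complex) = 0 \<and> Re (of_real RB :: complex) \<ge> \<xi> ^ 8" using x8 xi2 by simp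
  thus ?thesis by (simp only: Let_def B_eq)
qed

end
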